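(* For all $k\in\mathbb N$: (a) for all $f:\Xi_k\to\mathbb R$ and $g:\Xi_{k-1}\to\mathbb R$, $$\langle \mathfrak a_k g,f\rangle_{\alpha,k}=\frac{k}{|\alpha|+k-1}\langle g,\mathfrak a^\dagger_{k-1}f\rangle_{\alpha,k-1};$$ (b) $L^2(\mu_{\alpha,k})=\mathrm{Im}\,\mathfrak a_k\oplus\mathrm{Ker}\,\mathfrak a^\dagger_{k-1}$, an orthogonal direct sum.
   Context: $V$ is a finite set, $\alpha=(\alpha_x)_{x\in V}$ positive, $|\alpha|=\sum_x\alpha_x$. $\Xi_k:=\{\eta\in\mathbb N_0^V:\sum_x\eta_x=k\}$, $\Xi_0=\{0\}$ (functions on it are constants). $\mu_{\alpha,k}(\eta)=Z_{\alpha,k}^{-1}\prod_x\frac{\Gamma(\alpha_x+\eta_x)}{\Gamma(\alpha_x)\eta_x!}$ with $Z_{\alpha,k}=\frac{\Gamma(|\alpha|+k)}{\Gamma(|\alpha|)k!}$ (a probability measure on $\Xi_k$), and $\langle f,g\rangle_{\alpha,k}=\sum_{\eta\in\Xi_k}\mu_{\alpha,k}(\eta)f(\eta)g(\eta)$, defining $L^2(\mu_{\alpha,k})$. The annihilation operator $\mathfrak a_k:\mathbb R^{\Xi_{k-1}}\to\mathbb R^{\Xi_k}$ is $\mathfrak a_kg(\eta)=\sum_x\eta_x\,g(\eta-\delta_x)$ (terms with $\eta_x=0$ vanish), and the creation operator $\mathfrak a^\dagger_{k-1}:\mathbb R^{\Xi_k}\to\mathbb R^{\Xi_{k-1}}$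 is $\mathfrak a^\dagger_{k-1}f(\xi)=\sum_x(\xi_x+\alpha_x)f(\xi+\delta_x)$. *)

theory Defs
  imports "HOL-Analysis.Analysis"
begin

definition Xi :: "'v set \<Rightarrow> nat \<Rightarrow> ('v \<Rightarrow> nat) set" where
  "Xi V k = {\<eta>. (\<forall>x. x \<notin> V \<longrightarrow> \<eta> x = 0) \<and> (\<Sum>x\<in>V. \<eta> x) = k}"

definition Zc :: "'v set \<Rightarrow> ('v \<Rightarrow> real) \<Rightarrow> nat \<Rightarrow> real" where
  "Zc V \<alpha> k = Gamma (sum \<alpha> V + real k) / (Gamma (sum \<alpha> V) * fact k)"

definition mu :: "'v set \<Rightarrow> ('v \<Rightarrow> real) \<Rightarrow> nat \<Rightarrow> ('v \<Rightarrow> nat) \<Rightarrow> real" where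
  "mu V \<alpha> k \<eta> = (\<Prod>x\<in>V. Gamma (\<alpha> x + real (\<eta> x)) / (Gamma (\<alpha> x) * fact (\<eta> x))) / Zc V \<alpha> k"

definition inner_mu :: "'v set \<Rightarrow> ('v \<Rightarrow> real) \<Rightarrow> nat \<Rightarrow> (('v \<Rightarrow> nat) \<Rightarrow> real)
    \<Rightarrow> (('v \<Rightarrow> nat) \<Rightarrow> real) \<Rightarrow> real" where
  "inner_mu V \<alpha> k f g = (\<Sum>\<eta>\<in>Xi V k. mu V \<alpha> k \<eta> * f \<eta> * g \<eta>)"

text \<open>Annihilation operator: \<open>(a g)(\<eta>) = \<Sum>x \<eta>_x g(\<eta> - \<delta>_x)\<close>; terms with \<open>\<eta>_x = 0\<close> vanish.\<close>
definition ann :: "'v set \<Rightarrow> (('v \<Rightarrow> nat) \<Rightarrow> real) \<Rightarrow> ('v \<Rightarrow> nat) \<Rightarrow> real" where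
  "ann V g \<eta> = (\<Sum>x\<in>V. real (\<eta> x) * g (\<eta>(x := \<eta> x - 1)))"

definition cre :: "'v set \<Rightarrow> ('v \<Rightarrow> real) \<Rightarrow> (('v \<Rightarrow> nat) \<Rightarrow> real) \<Rightarrow> ('v \<Rightarrow> nat) \<Rightarrow> real" where
  "cre V \<alpha> f \<xi> = (\<Sum>x\<in>V. (real (\<xi> x) + \<alpha> x) * f (\<xi>(x := \<xi> x + 1)))"

end

theory Submission
  imports Defs
begin

lemma Gamma_step: "(z::real) > 0 \<Longrightarrow> Gamma (z + 1) = z * Gamma z"
  by (rule Gamma_plus1) (auto dest: nonpos_Ints_nonpos)

lemma finite_Xi: "finite V \<Longrightarrow> finite (Xi V k)"
proof -
  assume fV: "finite V"
  have "Xi V k \<subseteq> {f. \<forall>x. (x \<in> V \<longrightarrow> f x \<in> {0..k}) \<and> (x \<notin> V \<longrightarrow> f x = 0)}"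
  proof
    fix \<eta> assume h: "\<eta> \<in> Xi V k"
    have "\<eta> x \<le> k" if "x \<in> V" for x
      using h that fV member_le_sum[of x V \<eta>] by (auto simp: Xi_def)
    then show "\<eta> \<in> {f. \<forall>x. (x \<in> V \<longrightarrow> f x \<in> {0..k}) \<and> (x \<notin> V \<longrightarrow> f x = 0)}"
      using h by (auto simp: Xi_def)
  qed
  then show ?thesis using finite_subset finite_set_of_finite_funs[OF fV, of "{0..k}" 0] by blast
qed

lemma Xi_nonempty_V: "\<eta> \<in> Xi V k \<Longrightarrow> k \<ge> 1 \<Longrightarrow> V \<noteq> {}"
  by (auto simp: Xi_def)

lemma Zc_pos: assumes "finite V" "V \<noteq> {}" "\<forall>x\<in>V. \<alpha> x > 0" shows "Zc V \<alpha> k > 0"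
proof -
  have "sum \<alpha> V > 0" using assms by (simp add: sum_pos)
  then show ?thesis by (auto simp: Zc_def intro!: divide_pos_pos mult_pos_pos)
qed

lemma mu_pos: assumes "finite V" "V \<noteq> {}" "\<forall>x\<in>V. \<alpha> x > 0" shows "mu V \<alpha> k \<eta> > 0"
  unfolding mu_def using assms
  by (auto intro!: divide_pos_pos prod_pos Zc_pos mult_pos_pos)

lemma Zc_step: assumes "finite V" "V \<noteq> {}" "\<forall>x\<in>V. \<alpha> x > 0" "k \<ge> 1"
  shows "Zc V \<alpha> k = Zc V \<alpha> (k - 1) * (sum \<alpha> V + real k - 1) / real k"
proof -
  have A: "sum \<alpha> V > 0" using assms by (simp add: sum_pos)
  obtain m where k: "k = Suc m" using assms(4) by (cases k) auto
  have "Gamma (sum \<alpha> V + real k) = (sum \<alpha> V + real m) * Gamma (sum \<alpha> V + real m)"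
    using Gamma_step[of "sum \<alpha> V + real m"] A k by (simp add: add_ac)
  moreover have "Gamma (sum \<alpha> V) > 0" using A by simp
  ultimately show ?thesis using k by (simp add: Zc_def field_simps)
qed

definition wt :: "'v set \<Rightarrow> ('v \<Rightarrow> real) \<Rightarrow> ('v \<Rightarrow> nat) \<Rightarrow> real" where
  "wt V \<alpha> \<eta> = (\<Prod>x\<in>V. Gamma (\<alpha> x + real (\<eta> x)) / (Gamma (\<alpha> x) * fact (\<eta> x)))"

lemma aux_mult: "(a::real) * c = b * d \<Longrightarrow> a * p * c = b * p * d"
proof -
  assume h: "a * c = b * d"
  have "a * p * c = (a * c) * p" by (simp add: algebra_simps)
  also have "\<dots> = (b * d) * p" using h by simp
  also have "\<dots> = b * p * d" by (simp add: algebra_simps)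
  finally show ?thesis .
qed

lemma wt_step: assumes "finite V" "x \<in> V" "\<alpha> x > 0"
  shows "wt V \<alpha> (\<xi>(x := \<xi> x + 1)) * (real (\<xi> x) + 1) = wt V \<alpha> \<xi> * (real (\<xi> x) + \<alpha> x)"
proof -
  let ?t = "\<lambda>\<eta> y. Gamma (\<alpha> y + real (\<eta> y)) / (Gamma (\<alpha> y) * fact (\<eta> y))"
  have r1: "wt V \<alpha> (\<xi>(x := \<xi> x + 1)) = ?t (\<xi>(x := \<xi> x + 1)) x * (\<Prod>y\<in>V-{x}. ?t \<xi> y)"
    unfolding wt_def using assms by (simp add: prod.remove)
  have r2: "wt V \<alpha> \<xi> = ?t \<xi> x * (\<Prod>y\<in>V-{x}. ?t \<xi> y)"
    unfolding wt_def using assms by (simp add: prod.remove)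
  have g: "Gamma (\<alpha> x + real (\<xi> x) + 1) = (\<alpha> x + real (\<xi> x)) * Gamma (\<alpha> x + real (\<xi> x))"
    using assms by (intro Gamma_step) simp
  have tx: "?t (\<xi>(x := \<xi> x + 1)) x * (real (\<xi> x) + 1) = ?t \<xi> x * (real (\<xi> x) + \<alpha> x)"
  proof -
    define n where "n = \<xi> x"
    define a where "a = \<alpha> x"
    define G where "G = Gamma (a + real n)"
    have p1: "Gamma a > 0" using assms by (simp add: a_def)
    have p2: "(fact n :: real) > 0" by simp
    have e1: "Gamma (a + real (n + 1)) = (a + real n) * G"
      using g by (simp add: a_def n_def G_def add_ac)
    have e2: "(fact (n + 1) :: real) = (real n + 1) * fact n" by (simp add: algebra_simps)
    have "Gamma (a + real (n + 1)) / (Gamma a * fact (n + 1)) * (real n + 1) = G / (Gamma a * fact n) * (real n + a)"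
    proof -
      have p3: "Gamma a * ((real n + 1) * fact n) \<noteq> 0" using p1 p2 by (simp add: add_pos_pos)
      have p4: "Gamma a * fact n \<noteq> 0" using p1 p2 by simp
      show ?thesis unfolding e1 e2 using p3 p4 by (simp add: divide_simps)
    qed
    then show ?thesis by (simp add: a_def n_def G_def)
  qed
  show ?thesis unfolding r1 r2 by (rule aux_mult[OF tx])
qed

lemma mu_wt: "mu V \<alpha> k \<eta> = wt V \<alpha> \<eta> / Zc V \<alpha> k"
  by (simp add: mu_def wt_def)

lemma mu_step: assumes "finite V" "x \<in> V" "\<forall>x\<in>V. \<alpha> x > 0" "k \<ge> 1"
  shows "mu V \<alpha> k (\<xi>(x := \<xi> x + 1)) * (real (\<xi> x) + 1)
    = real k / (sum \<alpha> V + real k - 1) * (mu V \<alpha> (k - 1) \<xi> * (real (\<xi> x) + \<alpha> x))"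
proof -
  have V: "V \<noteq> {}" using assms by auto
  have A: "sum \<alpha> V > 0" using assms V by (simp add: sum_pos)
  have Z: "Zc V \<alpha> (k - 1) > 0" using Zc_pos[OF assms(1) V assms(3)] .
  show ?thesis
    unfolding mu_wt Zc_step[OF assms(1) V assms(3,4)]
    using wt_step[OF assms(1,2), of \<alpha> \<xi>] assms A Z
    by (simp add: field_simps)
qed

lemma sum_upd: "finite V \<Longrightarrow> x \<in> V \<Longrightarrow> (\<Sum>y\<in>V. (\<xi>(x := m)) y) + \<xi> x = (\<Sum>y\<in>V. \<xi> y) + (m::nat)"
proof -
  assume a: "finite V" "x \<in> V"
  have "(\<Sum>y\<in>V. (\<xi>(x := m)) y) = m + (\<Sum>y\<in>V-{x}. \<xi> y)"
    using a by (simp add: sum.remove)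
  moreover have "(\<Sum>y\<in>V. \<xi> y) = \<xi> x + (\<Sum>y\<in>V-{x}. \<xi> y)"
    using a by (simp add: sum.remove)
  ultimately show ?thesis by simp
qed

lemma shift_sum: assumes "finite V" "x \<in> V" "k \<ge> 1"
  shows "(\<Sum>\<eta>\<in>Xi V k. real (\<eta> x) * F \<eta>) = (\<Sum>\<xi>\<in>Xi V (k - 1). (real (\<xi> x) + 1) * F (\<xi>(x := \<xi> x + 1)))"
proof -
  have "(\<Sum>\<eta>\<in>Xi V k. real (\<eta> x) * F \<eta>) = (\<Sum>\<eta>\<in>{\<eta>\<in>Xi V k. \<eta> x \<ge> 1}. real (\<eta> x) * F \<eta>)"
    by (rule sum.mono_neutral_right) (auto simp: finite_Xi assms)
  also have "\<dots> = (\<Sum>\<xi>\<in>Xi V (k - 1). (real (\<xi> x) + 1) * F (\<xi>(x := \<xi> x + 1)))"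
  proof (rule sum.reindex_bij_witness[where j = "\<lambda>\<eta>. \<eta>(x := \<eta> x - 1)" and i = "\<lambda>\<xi>. \<xi>(x := \<xi> x + 1)"])
    fix a assume a: "a \<in> {\<eta>\<in>Xi V k. \<eta> x \<ge> 1}"
    then show "(a(x := a x - 1))(x := (a(x := a x - 1)) x + 1) = a" by (auto simp: fun_eq_iff)
    show "a(x := a x - 1) \<in> Xi V (k - 1)"
      using a sum_upd[OF assms(1,2), of a "a x - 1"] assms(2) by (auto simp: Xi_def)
    show "(real ((a(x := a x - 1)) x) + 1) * F ((a(x := a x - 1))(x := (a(x := a x - 1)) x + 1)) = real (a x) * F a"
      using a by (auto simp: fun_eq_iff of_nat_diff)
  next
    fix b assume b: "b \<in> Xi V (k - 1)"
    then show "(b(x := b x + 1))(x := (b(x := b x + 1)) x - 1) = b" by (auto simp: fun_eq_iff)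
    show "b(x := b x + 1) \<in> {\<eta>\<in>Xi V k. \<eta> x \<ge> 1}"
      using b sum_upd[OF assms(1,2), of b "b x + 1"] assms by (auto simp: Xi_def)
  qed
  finally show ?thesis .
qed

lemma adj: assumes "finite V" "\<forall>x\<in>V. \<alpha> x > 0" "k \<ge> 1"
  shows "inner_mu V \<alpha> k (ann V g) f
     = real k / (sum \<alpha> V + real k - 1) * inner_mu V \<alpha> (k - 1) g (cre V \<alpha> f)"
proof -
  let ?c = "real k / (sum \<alpha> V + real k - 1)"
  have "inner_mu V \<alpha> k (ann V g) f
      = (\<Sum>x\<in>V. \<Sum>\<eta>\<in>Xi V k. real (\<eta> x) * (mu V \<alpha> k \<eta> * g (\<eta>(x := \<eta> x - 1)) * f \<eta>))"
    unfolding inner_mu_def ann_def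
    by (subst sum.swap) (simp add: sum_distrib_left sum_distrib_right mult_ac)
  also have "\<dots> = (\<Sum>x\<in>V. \<Sum>\<xi>\<in>Xi V (k - 1). ?c * (mu V \<alpha> (k - 1) \<xi> * g \<xi> * ((real (\<xi> x) + \<alpha> x) * f (\<xi>(x := \<xi> x + 1)))))"
  proof (rule sum.cong[OF refl])
    fix x assume x: "x \<in> V"
    have "(\<Sum>\<eta>\<in>Xi V k. real (\<eta> x) * (mu V \<alpha> k \<eta> * g (\<eta>(x := \<eta> x - 1)) * f \<eta>))
      = (\<Sum>\<xi>\<in>Xi V (k - 1). (real (\<xi> x) + 1) * (mu V \<alpha> k (\<xi>(x := \<xi> x + 1)) * g \<xi> * f (\<xi>(x := \<xi> x + 1))))"
      using shift_sum[OF assms(1) x assms(3), of "\<lambda>\<eta>. mu V \<alpha> k \<eta> * g (\<eta>(x := \<eta> x - 1)) * f \<eta>"]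
      by simp
    also have "\<dots> = (\<Sum>\<xi>\<in>Xi V (k - 1). ?c * (mu V \<alpha> (k - 1) \<xi> * g \<xi> * ((real (\<xi> x) + \<alpha> x) * f (\<xi>(x := \<xi> x + 1)))))"
    proof (rule sum.cong[OF refl])
      fix \<xi>
      have "(real (\<xi> x) + 1) * (mu V \<alpha> k (\<xi>(x := \<xi> x + 1)) * g \<xi> * f (\<xi>(x := \<xi> x + 1)))
        = (mu V \<alpha> k (\<xi>(x := \<xi> x + 1)) * (real (\<xi> x) + 1)) * (g \<xi> * f (\<xi>(x := \<xi> x + 1)))"
        by (simp add: mult_ac)
      also have "\<dots> = ?c * (mu V \<alpha> (k - 1) \<xi> * (real (\<xi> x) + \<alpha> x)) * (g \<xi> * f (\<xi>(x := \<xi> x + 1)))"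
        by (simp only: mu_step[OF assms(1) x assms(2,3)])
      finally show "(real (\<xi> x) + 1) * (mu V \<alpha> k (\<xi>(x := \<xi> x + 1)) * g \<xi> * f (\<xi>(x := \<xi> x + 1)))
        = ?c * (mu V \<alpha> (k - 1) \<xi> * g \<xi> * ((real (\<xi> x) + \<alpha> x) * f (\<xi>(x := \<xi> x + 1))))"
        by (simp add: mult_ac)
    qed
    finally show "(\<Sum>\<eta>\<in>Xi V k. real (\<eta> x) * (mu V \<alpha> k \<eta> * g (\<eta>(x := \<eta> x - 1)) * f \<eta>))
      = (\<Sum>\<xi>\<in>Xi V (k - 1). ?c * (mu V \<alpha> (k - 1) \<xi> * g \<xi> * ((real (\<xi> x) + \<alpha> x) * f (\<xi>(x := \<xi> x + 1)))))" .
  qed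
  also have "\<dots> = ?c * inner_mu V \<alpha> (k - 1) g (cre V \<alpha> f)"
    unfolding inner_mu_def cre_def
    by (subst sum.swap) (simp add: sum_distrib_left)
  finally show ?thesis .
qed

lemma gs:
  fixes X :: "'a set" and w :: "'a \<Rightarrow> real" and u :: "'i \<Rightarrow> 'a \<Rightarrow> real"
  assumes fX: "finite X" and wp: "\<forall>\<eta>\<in>X. w \<eta> > 0" and fS: "finite S"
  shows "\<forall>f. \<exists>c. \<forall>j\<in>S. (\<Sum>\<eta>\<in>X. w \<eta> * (f \<eta> - (\<Sum>i\<in>S. c i * u i \<eta>)) * u j \<eta>) = 0"
  using fS
proof (induction S rule: finite_induct)
  case empty show ?case by simp
next
  case (insert a S)
  define B where "B p q = (\<Sum>\<eta>\<in>X. w \<eta> * p \<eta> * q \<eta>)" for p q :: "'a \<Rightarrow> real"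
  have Blin: "B (\<lambda>\<eta>. p \<eta> - t * q \<eta>) v = B p v - t * B q v" for p q v t
    unfolding B_def by (simp add: algebra_simps sum_subtractf sum_distrib_left)
  have Bsum: "B p (\<lambda>\<eta>. q \<eta> + (\<Sum>i\<in>S. d i * u i \<eta>)) = B p q + (\<Sum>i\<in>S. d i * B p (u i))" for p q d
    unfolding B_def by (simp add: algebra_simps sum.distrib sum_distrib_left) (subst sum.swap, simp add: mult_ac)
  show ?case
  proof
    fix f
    from insert.IH obtain c1 where c1: "\<forall>j\<in>S. B (\<lambda>\<eta>. f \<eta> - (\<Sum>i\<in>S. c1 i * u i \<eta>)) (u j) = 0"
      unfolding B_def by blast
    from insert.IH obtain d where d: "\<forall>j\<in>S. B (\<lambda>\<eta>. u a \<eta> - (\<Sum>i\<in>S. d i * u i \<eta>)) (u j) = 0"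
      unfolding B_def by blast
    define r where "r \<eta> = f \<eta> - (\<Sum>i\<in>S. c1 i * u i \<eta>)" for \<eta>
    define s where "s \<eta> = u a \<eta> - (\<Sum>i\<in>S. d i * u i \<eta>)" for \<eta>
    define t where "t = B r s / B s s"
    define c where "c i = (if i = a then t else c1 i - t * d i)" for i
    have sumc: "(\<Sum>i\<in>insert a S. c i * u i \<eta>) = (\<Sum>i\<in>S. c1 i * u i \<eta>) + t * s \<eta>" for \<eta>
    proof -
      have "(\<Sum>i\<in>insert a S. c i * u i \<eta>) = t * u a \<eta> + (\<Sum>i\<in>S. c i * u i \<eta>)"
        using insert.hyps by (simp add: c_def)
      also have "(\<Sum>i\<in>S. c i * u i \<eta>) = (\<Sum>i\<in>S. c1 i * u i \<eta> - t * (d i * u i \<eta>))"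
        using insert.hyps by (intro sum.cong) (auto simp: c_def algebra_simps)
      finally show ?thesis
        by (simp add: s_def sum_subtractf sum_distrib_left algebra_simps)
    qed
    have res: "(\<lambda>\<eta>. f \<eta> - (\<Sum>i\<in>insert a S. c i * u i \<eta>)) = (\<lambda>\<eta>. r \<eta> - t * s \<eta>)"
      using sumc by (auto simp: r_def fun_eq_iff)
    have rS: "\<forall>j\<in>S. B r (u j) = 0" using c1 by (simp add: r_def[abs_def])
    have sS: "\<forall>j\<in>S. B s (u j) = 0" using d by (simp add: s_def[abs_def])
    have r'S: "\<forall>j\<in>S. B (\<lambda>\<eta>. r \<eta> - t * s \<eta>) (u j) = 0" using rS sS Blin by simp
    have rs0: "B (\<lambda>\<eta>. r \<eta> - t * s \<eta>) s = 0"
    proof (cases "B s s = 0")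
      case True
      have nn: "\<forall>\<eta>\<in>X. 0 \<le> w \<eta> * s \<eta> * s \<eta>"
        using wp by (simp add: mult.assoc mult_nonneg_nonneg less_imp_le)
      have "\<forall>\<eta>\<in>X. w \<eta> * s \<eta> * s \<eta> = 0"
        using True fX nn sum_nonneg_eq_0_iff[of X "\<lambda>\<eta>. w \<eta> * s \<eta> * s \<eta>"] unfolding B_def by blast
      then have "\<forall>\<eta>\<in>X. s \<eta> = 0" using wp by (metis less_irrefl mult_eq_0_iff)
      then have "B r s = 0" unfolding B_def by simp
      then show ?thesis using True Blin by simp
    next
      case False
      have "B (\<lambda>\<eta>. r \<eta> - t * s \<eta>) s = B r s - t * B s s" by (rule Blin)
      then show ?thesis using False by (simp add: t_def)
    qed
    have ua: "u a = (\<lambda>\<eta>. s \<eta> + (\<Sum>i\<in>S. d i * u i \<eta>))" by (simp add: s_def fun_eq_iff)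
    have "B (\<lambda>\<eta>. r \<eta> - t * s \<eta>) (u a) = 0"
      by (subst ua, subst Bsum) (simp add: rs0 r'S)
    then have "\<forall>j\<in>insert a S. B (\<lambda>\<eta>. f \<eta> - (\<Sum>i\<in>insert a S. c i * u i \<eta>)) (u j) = 0"
      using r'S res by simp
    then show "\<exists>c. \<forall>j\<in>insert a S. (\<Sum>\<eta>\<in>X. w \<eta> * (f \<eta> - (\<Sum>i\<in>insert a S. c i * u i \<eta>)) * u j \<eta>) = 0"
      unfolding B_def by blast
  qed
qed

definition ind :: "('v \<Rightarrow> nat) \<Rightarrow> ('v \<Rightarrow> nat) \<Rightarrow> real" where
  "ind \<xi> \<zeta> = (if \<zeta> = \<xi> then 1 else 0)"

lemma ann_expand: assumes "finite S"
  shows "ann V (\<lambda>\<zeta>. if \<zeta> \<in> S then c \<zeta> else 0) \<eta> = (\<Sum>\<xi>\<in>S. c \<xi> * ann V (ind \<xi>) \<eta>)"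
proof -
  have "(\<Sum>\<xi>\<in>S. c \<xi> * ann V (ind \<xi>) \<eta>) = (\<Sum>x\<in>V. real (\<eta> x) * (\<Sum>\<xi>\<in>S. if \<eta>(x := \<eta> x - 1) = \<xi> then c \<xi> else 0))"
  proof -
    have "(\<Sum>\<xi>\<in>S. c \<xi> * ann V (ind \<xi>) \<eta>) = (\<Sum>\<xi>\<in>S. \<Sum>x\<in>V. real (\<eta> x) * (if \<eta>(x := \<eta> x - 1) = \<xi> then c \<xi> else 0))"
      unfolding ann_def ind_def sum_distrib_left by (intro sum.cong refl) auto
    also have "\<dots> = (\<Sum>x\<in>V. \<Sum>\<xi>\<in>S. real (\<eta> x) * (if \<eta>(x := \<eta> x - 1) = \<xi> then c \<xi> else 0))"
      by (rule sum.swap)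
    finally show ?thesis by (simp add: sum_distrib_left)
  qed
  also have "\<dots> = ann V (\<lambda>\<zeta>. if \<zeta> \<in> S then c \<zeta> else 0) \<eta>"
    unfolding ann_def by (rule sum.cong[OF refl]) (subst sum.delta'[OF assms], rule refl)
  finally show ?thesis by simp
qed

lemma inner_ind: assumes "finite V" "\<xi> \<in> Xi V m"
  shows "inner_mu V \<alpha> m (ind \<xi>) h = mu V \<alpha> m \<xi> * h \<xi>"
proof -
  have "inner_mu V \<alpha> m (ind \<xi>) h = (\<Sum>\<eta>\<in>Xi V m. if \<eta> = \<xi> then mu V \<alpha> m \<xi> * h \<xi> else 0)"
    unfolding inner_mu_def ind_def by (rule sum.cong) auto
  then show ?thesis using assms finite_Xi[OF assms(1), of m] by (simp add: sum.delta)
qed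

theorem proposition3p1:
  fixes V :: "'v set" and \<alpha> :: "'v \<Rightarrow> real" and k :: nat
  assumes "finite V" and "\<forall>x\<in>V. \<alpha> x > 0" and "k \<ge> 1"
  shows "(\<forall>f g. inner_mu V \<alpha> k (ann V g) f
            = real k / (sum \<alpha> V + real k - 1) * inner_mu V \<alpha> (k - 1) g (cre V \<alpha> f))
    \<and> (\<forall>f. \<exists>g h. (\<forall>\<xi>\<in>Xi V (k - 1). cre V \<alpha> h \<xi> = 0)
                 \<and> (\<forall>\<eta>\<in>Xi V k. f \<eta> = ann V g \<eta> + h \<eta>))
    \<and> (\<forall>g h. (\<forall>\<xi>\<in>Xi V (k - 1). cre V \<alpha> h \<xi> = 0) \<longrightarrow> inner_mu V \<alpha> k (ann V g) h = 0)
    \<and> (\<forall>g. (\<forall>\<xi>\<in>Xi V (k - 1). cre V \<alpha> (ann V g) \<xi> = 0) \<longrightarrow> (\<forall>\<eta>\<in>Xi V k. ann V g \<eta> = 0))"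
proof (intro conjI allI impI)
  let ?c = "real k / (sum \<alpha> V + real k - 1)"
  show A: "inner_mu V \<alpha> k (ann V g) f = ?c * inner_mu V \<alpha> (k - 1) g (cre V \<alpha> f)" for f g
    by (rule adj[OF assms])
  show "inner_mu V \<alpha> k (ann V g) h = 0" if h: "\<forall>\<xi>\<in>Xi V (k - 1). cre V \<alpha> h \<xi> = 0" for g h
  proof -
    have "inner_mu V \<alpha> (k - 1) g (cre V \<alpha> h) = 0" unfolding inner_mu_def using h by simp
    then show ?thesis by (simp only: A mult_zero_right)
  qed
  show "\<forall>\<eta>\<in>Xi V k. ann V g \<eta> = 0" if h: "\<forall>\<xi>\<in>Xi V (k - 1). cre V \<alpha> (ann V g) \<xi> = 0" for g
  proof
    fix \<eta> assume \<eta>: "\<eta> \<in> Xi V k"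
    have V: "V \<noteq> {}" using Xi_nonempty_V[OF \<eta> assms(3)] .
    have z: "(\<Sum>\<eta>\<in>Xi V k. mu V \<alpha> k \<eta> * ann V g \<eta> * ann V g \<eta>) = 0"
    proof -
      have "inner_mu V \<alpha> (k - 1) g (cre V \<alpha> (ann V g)) = 0" unfolding inner_mu_def using h by simp
      then have "inner_mu V \<alpha> k (ann V g) (ann V g) = 0" by (simp only: A mult_zero_right)
      then show ?thesis by (simp only: inner_mu_def)
    qed
    have nn: "\<forall>\<eta>'\<in>Xi V k. 0 \<le> mu V \<alpha> k \<eta>' * ann V g \<eta>' * ann V g \<eta>'"
    proof
      fix \<eta>' assume "\<eta>' \<in> Xi V k"
      have p: "0 < mu V \<alpha> k \<eta>'" by (rule mu_pos[OF assms(1) V assms(2)])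
      have sq: "0 \<le> ann V g \<eta>' * ann V g \<eta>'" by (rule zero_le_square)
      have "0 \<le> mu V \<alpha> k \<eta>' * (ann V g \<eta>' * ann V g \<eta>')"
        using mult_nonneg_nonneg[OF less_imp_le[OF p] sq] .
      then show "0 \<le> mu V \<alpha> k \<eta>' * ann V g \<eta>' * ann V g \<eta>'" by (simp only: mult.assoc)
    qed
    have all0: "\<forall>\<eta>'\<in>Xi V k. mu V \<alpha> k \<eta>' * ann V g \<eta>' * ann V g \<eta>' = 0"
      using iffD1[OF sum_nonneg_eq_0_iff[OF finite_Xi[OF assms(1), of k] bspec[OF nn]] z] .
    have "mu V \<alpha> k \<eta> * ann V g \<eta> * ann V g \<eta> = 0" by (rule bspec[OF all0 \<eta>])
    then show "ann V g \<eta> = 0" using mu_pos[OF assms(1) V assms(2), of k \<eta>] by simp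
  qed
  fix f
  show "\<exists>g h. (\<forall>\<xi>\<in>Xi V (k - 1). cre V \<alpha> h \<xi> = 0) \<and> (\<forall>\<eta>\<in>Xi V k. f \<eta> = ann V g \<eta> + h \<eta>)"
  proof (cases "V = {}")
    case True
    have "Xi V k = {}" using True Xi_nonempty_V assms(3) by blast
    then show ?thesis using True by (intro exI[of _ "\<lambda>_. 0"]) (simp add: cre_def)
  next
    case V: False
    have Ap: "sum \<alpha> V > 0" using assms V by (simp add: sum_pos)
    have cpos: "?c > 0" using Ap assms(3) by simp
    obtain c where c: "\<forall>j\<in>Xi V (k - 1). (\<Sum>\<eta>\<in>Xi V k. mu V \<alpha> k \<eta> * (f \<eta> - (\<Sum>i\<in>Xi V (k - 1). c i * ann V (ind i) \<eta>)) * ann V (ind j) \<eta>) = 0"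
    proof -
      have "\<forall>\<eta>\<in>Xi V k. mu V \<alpha> k \<eta> > 0" using mu_pos[OF assms(1) V assms(2)] by simp
      from gs[OF finite_Xi[OF assms(1), of k] this finite_Xi[OF assms(1), of "k - 1"], where u="\<lambda>i. ann V (ind i)"]
      show ?thesis using that by (elim allE[of _ f] exE) 
    qed
    define g where "g \<zeta> = (if \<zeta> \<in> Xi V (k - 1) then c \<zeta> else 0)" for \<zeta>
    define h where "h \<eta> = f \<eta> - ann V g \<eta>" for \<eta>
    have hexp: "h \<eta> = f \<eta> - (\<Sum>i\<in>Xi V (k - 1). c i * ann V (ind i) \<eta>)" for \<eta>
      unfolding h_def g_def by (simp add: ann_expand finite_Xi assms(1))
    have "cre V \<alpha> h \<xi> = 0" if \<xi>: "\<xi> \<in> Xi V (k - 1)" for \<xi>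
    proof -
      have c': "(\<Sum>\<eta>\<in>Xi V k. mu V \<alpha> k \<eta> * h \<eta> * ann V (ind \<xi>) \<eta>) = 0"
        unfolding hexp by (rule bspec[OF c \<xi>])
      have "inner_mu V \<alpha> k (ann V (ind \<xi>)) h = (\<Sum>\<eta>\<in>Xi V k. mu V \<alpha> k \<eta> * h \<eta> * ann V (ind \<xi>) \<eta>)"
        unfolding inner_mu_def by (rule sum.cong) (simp_all add: mult_ac)
      then have "inner_mu V \<alpha> k (ann V (ind \<xi>)) h = 0" using c' by simp
      then have "?c * (mu V \<alpha> (k - 1) \<xi> * cre V \<alpha> h \<xi>) = 0"
        unfolding A inner_ind[OF assms(1) \<xi>] .
      moreover have "?c \<noteq> 0" using cpos by (rule less_imp_neq[symmetric])
      moreover have "mu V \<alpha> (k - 1) \<xi> \<noteq> 0" using mu_pos[OF assms(1) V assms(2), of "k - 1" \<xi>] by simp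
      ultimately show ?thesis by (simp only: mult_eq_0_iff) blast
    qed
    then show ?thesis by (intro exI[of _ g] exI[of _ h]) (simp add: h_def)
  qed
qed

end
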